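(* Let $\mathcal O$ be the ring of integers of a finite extension of $\mathbb{Q}_p$, with maximal ideal $\mathfrak m$ of ramification index $e\le p-1$ and residue field $\mathbb F$. Let $P,Q\in\mathcal O[X]$ be monic of degree $d$, with roots $\alpha_1,\dots,\alpha_d$ and $\beta_1,\dots,\beta_d$ respectively (with multiplicity) in the ring of integers $\mathcal O'$ of a finite extension, with maximal ideal $\mathfrak m'$. Suppose that for every $n\ge1$, $$\alpha_1^n+\dots+\alpha_d^n\equiv\beta_1^n+\dots+\beta_d^n\pmod{n\mathfrak m}.$$ Then after reordering, $\alpha_i\equiv\beta_i\pmod{\mathfrak m'}$ for every $1\le i\le d$.
   Context: $n\mathfrak m=\{na:a\in\mathfrak m\}\subseteq\mathcal O$; the congruence is an assertion about elements of $\mathcal O$. *)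

theory Defs
  imports "HOL-Computational_Algebra.Polynomial"
begin

definition is_subfield :: "'a::field set \<Rightarrow> bool" where
  "is_subfield K \<longleftrightarrow> 0 \<in> K \<and> 1 \<in> K \<and>
     (\<forall>x\<in>K. \<forall>y\<in>K. x + y \<in> K \<and> x - y \<in> K \<and> x * y \<in> K) \<and>
     (\<forall>x\<in>K. inverse x \<in> K)"

text \<open>A normalized discrete valuation on the nonzero elements of a subfield S
  (its value at 0, i.e. infinity, is not represented; 0 is treated separately).\<close>
definition discrete_valuation_on :: "'a::field set \<Rightarrow> ('a \<Rightarrow> int) \<Rightarrow> bool" where
  "discrete_valuation_on S v \<longleftrightarrow>
     (\<forall>x\<in>S - {0}. \<forall>y\<in>S - {0}. v (x * y) = v x + v y \<and>
        (x + y \<noteq> 0 \<longrightarrow> v (x + y) \<ge> min (v x) (v y))) \<and>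
     v ` (S - {0}) = UNIV"

definition val_ring :: "'a::field set \<Rightarrow> ('a \<Rightarrow> int) \<Rightarrow> 'a set" where
  "val_ring S v = {x \<in> S. x = 0 \<or> v x \<ge> 0}"

definition val_ideal :: "'a::field set \<Rightarrow> ('a \<Rightarrow> int) \<Rightarrow> 'a set" where
  "val_ideal S v = {x \<in> S. x = 0 \<or> v x > 0}"

definition val_complete :: "'a::field set \<Rightarrow> ('a \<Rightarrow> int) \<Rightarrow> bool" where
  "val_complete S v \<longleftrightarrow>
     (\<forall>x :: nat \<Rightarrow> 'a. (\<forall>k. x k \<in> S) \<longrightarrow>
        (\<forall>N. \<exists>M. \<forall>i\<ge>M. \<forall>j\<ge>M. x i = x j \<or> v (x i - x j) \<ge> N) \<longrightarrow>
        (\<exists>l\<in>S. \<forall>N. \<exists>M. \<forall>i\<ge>M. x i = l \<or> v (x i - l) \<ge> N))"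

text \<open>K (inside a field of characteristic 0) with v is (the valued field of) a finite
  extension of Q_p: a complete discretely valued field of characteristic 0 whose
  residue field is finite of characteristic p.\<close>
definition padic_local_field :: "'a::field_char_0 set \<Rightarrow> ('a \<Rightarrow> int) \<Rightarrow> nat \<Rightarrow> bool" where
  "padic_local_field K v p \<longleftrightarrow>
     prime p \<and> is_subfield K \<and> discrete_valuation_on K v \<and> val_complete K v \<and>
     v (of_nat p) > 0 \<and>
     (\<exists>R. finite R \<and> R \<subseteq> val_ring K v \<and>
        (\<forall>x\<in>val_ring K v. \<exists>r\<in>R. x - r \<in> val_ideal K v))"

text \<open>The whole field (type 'a) is a finite extension of K, equipped with a normalized
  discrete valuation w extending (a positive multiple of) v.\<close>
definition finite_valued_extension ::
    "'a::field set \<Rightarrow> ('a \<Rightarrow> int) \<Rightarrow> ('a \<Rightarrow> int) \<Rightarrow> bool" where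
  "finite_valued_extension K v w \<longleftrightarrow>
     (\<exists>B. finite B \<and> (\<forall>x. \<exists>c. (\<forall>b\<in>B. c b \<in> K) \<and> x = (\<Sum>b\<in>B. c b * b))) \<and>
     discrete_valuation_on UNIV w \<and>
     (\<exists>c::int. c > 0 \<and> (\<forall>x\<in>K - {0}. w x = c * v x))"

end

theory Submission
  imports Defs "HOL-Computational_Algebra.Polynomial_FPS"
begin
unbundle fps_syntax


locale dval =
  fixes w :: "'a::field_char_0 \<Rightarrow> int"
  assumes dv: "discrete_valuation_on UNIV w"
begin

definition "Ow = {x::'a. x = 0 \<or> w x \<ge> 0}"
definition "Mw = {x::'a. x = 0 \<or> w x > 0}"

lemma wmult: "x \<noteq> 0 \<Longrightarrow> y \<noteq> 0 \<Longrightarrow> w (x*y) = w x + w y"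
  using dv unfolding discrete_valuation_on_def by auto

lemma wadd: "x \<noteq> 0 \<Longrightarrow> y \<noteq> 0 \<Longrightarrow> x + y \<noteq> 0 \<Longrightarrow> w (x+y) \<ge> min (w x) (w y)"
  using dv unfolding discrete_valuation_on_def by auto

lemma w1: "w 1 = 0"
  using wmult[of 1 1] by simp

lemma wm1: "w (-1) = 0"
  using wmult[of "-1" "-1"] w1 by simp

lemma wneg: "w (-x) = w x"
proof (cases "x = 0")
  case False
  then show ?thesis using wmult[of "-1" x] wm1 by simp
qed simp

lemma wdiv: "x \<noteq> 0 \<Longrightarrow> y \<noteq> 0 \<Longrightarrow> w (x / y) = w x - w y"
  using wmult[of "x/y" y] by simp

lemma wpow: "x \<noteq> 0 \<Longrightarrow> w (x ^ n) = int n * w x"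
  by (induction n) (auto simp: wmult w1 algebra_simps)

lemma wprod: "(\<And>i. i \<in> A \<Longrightarrow> f i \<noteq> 0) \<Longrightarrow> w (prod f A) = (\<Sum>i\<in>A. w (f i))"
  by (induction A rule: infinite_finite_induct) (auto simp: wmult w1)

lemma Ow_0[simp]: "0 \<in> Ow" and Ow_1[simp]: "1 \<in> Ow" and Mw_0[simp]: "0 \<in> Mw"
  by (auto simp: Ow_def Mw_def w1)

lemma one_notin_Mw: "1 \<notin> Mw" by (simp add: Mw_def w1)

lemma Mw_OO: "x \<in> Mw \<Longrightarrow> x \<in> Ow" by (auto simp: Mw_def Ow_def)

lemma Ow_add: "x \<in> Ow \<Longrightarrow> y \<in> Ow \<Longrightarrow> x + y \<in> Ow"
  unfolding Ow_def using wadd[of x y] by force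

lemma Mw_add: "x \<in> Mw \<Longrightarrow> y \<in> Mw \<Longrightarrow> x + y \<in> Mw"
  unfolding Mw_def using wadd[of x y] by force

lemma Ow_neg: "x \<in> Ow \<Longrightarrow> -x \<in> Ow" by (auto simp: Ow_def wneg)
lemma Mw_neg: "x \<in> Mw \<Longrightarrow> -x \<in> Mw" by (auto simp: Mw_def wneg)

lemma Ow_diff: "x \<in> Ow \<Longrightarrow> y \<in> Ow \<Longrightarrow> x - y \<in> Ow"
  using Ow_add[OF _ Ow_neg[of y], of x] by (simp only: diff_conv_add_uminus)
lemma Mw_diff: "x \<in> Mw \<Longrightarrow> y \<in> Mw \<Longrightarrow> x - y \<in> Mw"
  using Mw_add[OF _ Mw_neg[of y], of x] by (simp only: diff_conv_add_uminus)

lemma Ow_mult: "x \<in> Ow \<Longrightarrow> y \<in> Ow \<Longrightarrow> x * y \<in> Ow"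
  unfolding Ow_def using wmult[of x y] by force
lemma Mw_mult: "x \<in> Mw \<Longrightarrow> y \<in> Ow \<Longrightarrow> x * y \<in> Mw"
  unfolding Ow_def Mw_def using wmult[of x y] by force
lemma Mw_mult': "x \<in> Ow \<Longrightarrow> y \<in> Mw \<Longrightarrow> x * y \<in> Mw"
  using Mw_mult[of y x] by (simp add: mult.commute)

lemma Ow_sum: "(\<And>i. i \<in> A \<Longrightarrow> f i \<in> Ow) \<Longrightarrow> sum f A \<in> Ow"
  by (induction A rule: infinite_finite_induct) (auto intro: Ow_add)
lemma Mw_sum: "(\<And>i. i \<in> A \<Longrightarrow> f i \<in> Mw) \<Longrightarrow> sum f A \<in> Mw"
  by (induction A rule: infinite_finite_induct) (auto intro: Mw_add)
lemma Ow_prod: "(\<And>i. i \<in> A \<Longrightarrow> f i \<in> Ow) \<Longrightarrow> prod f A \<in> Ow"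
  by (induction A rule: infinite_finite_induct) (auto intro: Ow_mult)
lemma Ow_pow: "x \<in> Ow \<Longrightarrow> x ^ n \<in> Ow"
  by (induction n) (auto intro: Ow_mult)

lemma Mw_prod_prime: "finite A \<Longrightarrow> (\<And>i. i \<in> A \<Longrightarrow> f i \<in> Ow) \<Longrightarrow> prod f A \<in> Mw \<Longrightarrow> \<exists>i\<in>A. f i \<in> Mw"
proof (induction A rule: finite_induct)
  case empty then show ?case by (simp add: one_notin_Mw)
next
  case (insert x F)
  have "f x * prod f F \<in> Mw" using insert by simp
  moreover have "prod f F \<in> Ow" using insert by (auto intro: Ow_prod)
  moreover have "f x \<in> Ow" using insert by simp
  ultimately have "f x \<in> Mw \<or> prod f F \<in> Mw"
    unfolding Mw_def Ow_def using wmult[of "f x" "prod f F"] by force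
  then show ?case using insert by auto
qed

lemma Ow_of_nat: "of_nat n \<in> Ow"
  by (induction n) (auto intro: Ow_add)
lemma Ow_of_int: "of_int n \<in> Ow"
  by (cases n rule: int_cases) (auto intro!: Ow_neg Ow_of_nat Ow_diff)

end

locale dvp = dval w for w :: "'a::field_char_0 \<Rightarrow> int" +
  fixes p :: nat and C :: int
  assumes p_prime: "prime p" and C_pos: "C > 0"
    and wp_pos: "w (of_nat p) > 0" and wp_le: "w (of_nat p) \<le> C * (int p - 1)"
begin

lemma w_nat_nonneg: "n \<noteq> 0 \<Longrightarrow> w (of_nat n) \<ge> 0"
  using Ow_of_nat[of n] by (simp add: Ow_def)

lemma p_Mw: "of_nat p \<in> Mw" using wp_pos by (simp add: Mw_def)

lemma w_coprime: assumes "\<not> p dvd j" shows "w (of_nat j) = 0"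
proof -
  have j0: "j \<noteq> 0" using assms by (metis dvd_0_right)
  have "coprime p j" using prime_imp_coprime[OF p_prime assms] .
  hence "coprime (int j) (int p)" by (simp add: coprime_commute)
  hence g: "gcd (int j) (int p) = 1" by (simp add: coprime_iff_gcd_eq_1)
  obtain u v where uv: "u * int j + v * int p = 1" using bezout_int[of "int j" "int p"] g by auto
  have eq: "of_int u * of_nat j + of_int v * of_nat p = (1::'a)"
    using arg_cong[OF uv, of "of_int :: int \<Rightarrow> 'a"] by simp
  show ?thesis
  proof (rule ccontr)
    assume "w (of_nat j) \<noteq> 0"
    hence "w (of_nat j) > 0" using w_nat_nonneg[OF j0] by simp
    hence "(of_nat j :: 'a) \<in> Mw" by (simp add: Mw_def)
    hence "of_int u * of_nat j + of_int v * of_nat p \<in> Mw"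
      by (intro Mw_add Mw_mult' Ow_of_int p_Mw)
    thus False using eq one_notin_Mw by simp
  qed
qed

lemma w_p_mult: "i \<noteq> 0 \<Longrightarrow> w (of_nat (p * i)) = w (of_nat p) + w (of_nat i)"
  using wmult[of "of_nat p" "of_nat i"] p_prime by (simp add: prime_gt_0_nat)

lemma w_fact_Suc: "w (fact (Suc k) :: 'a) = w (fact k :: 'a) + w (of_nat (Suc k) :: 'a)"
proof -
  have fS0: "(fact (Suc k) :: 'a) = fact k * of_nat (Suc k)" by (simp add: fact_Suc)
  have nz: "(of_nat (Suc k) :: 'a) \<noteq> 0" "(fact k :: 'a) \<noteq> 0" by (simp_all only: of_nat_eq_0_iff fact_nonzero) simp
  show ?thesis
    unfolding fS0 by (rule wmult[OF nz(2) nz(1)])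
qed

lemma w_fact_rec: "w (fact k :: 'a) = w (of_nat p) * int (k div p) + w (fact (k div p) :: 'a)"
proof (induction k)
  case 0 then show ?case by simp
next
  case (Suc k)
  have p1: "p > 1" using p_prime prime_gt_1_nat by blast
  have fS: "w (fact (Suc k) :: 'a) = w (fact k :: 'a) + w (of_nat (Suc k) :: 'a)"
    by (rule w_fact_Suc)
  show ?case
  proof (cases "p dvd Suc k")
    case True
    then obtain i where i: "Suc k = p * i" by auto
    have i0: "i \<noteq> 0" using i by (metis mult_0_right nat.distinct(1))
    have d1: "Suc k div p = i" using i p1 by simp
    have d2: "k div p = i - 1"
    proof -
      have k: "k = (p - 1) + (i - 1) * p" using i i0 p1
        by (cases i) (auto simp: algebra_simps)
      have "k div p = (i - 1) + (p - 1) div p"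
        unfolding k using p1 div_mult_self1[of p "p - 1" "i - 1"] by linarith
      thus ?thesis using p1 by simp
    qed
    have fi: "w (fact i :: 'a) = w (fact (i - 1) :: 'a) + w (of_nat i :: 'a)"
      using i0 w_fact_Suc[of "i - 1"] by simp
    show ?thesis
      using fS Suc.IH d1 d2 fi w_p_mult[OF i0] i0 unfolding i[symmetric]
      by (cases i) (auto simp: algebra_simps)
  next
    case False
    have "Suc k div p = k div p"
    proof -
      have "Suc k mod p \<noteq> 0" using False by (simp add: dvd_eq_mod_eq_0)
      thus ?thesis by (metis div_Suc p1 less_imp_neq less_zeroE neq0_conv zero_less_Suc
            div_mult_mod_eq)
    qed
    then show ?thesis using fS Suc.IH w_coprime[OF False] by simp
  qed
qed

lemma w_fact_bound: "k \<ge> 1 \<Longrightarrow> w (fact k :: 'a) \<le> C * (int k - 1)"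
proof (induction k rule: less_induct)
  case (less k)
  have p1: "p > 1" using p_prime prime_gt_1_nat by blast
  define q where "q = k div p"
  show ?case
  proof (cases "q = 0")
    case True
    then show ?thesis using w_fact_rec[of k] less.prems C_pos unfolding q_def[symmetric]
      by (simp add: w1)
  next
    case False
    have qk: "q < k" using p1 less.prems unfolding q_def by simp
    have IH: "w (fact q :: 'a) \<le> C * (int q - 1)" using less.IH[OF qk] False by simp
    have pq: "int p * int q \<le> int k" unfolding q_def
      by (metis of_nat_le_iff of_nat_mult times_div_less_eq_dividend)
    have "w (fact k :: 'a) = w (of_nat p) * int q + w (fact q :: 'a)"
      using w_fact_rec[of k] unfolding q_def by simp
    also have "\<dots> \<le> C * (int p - 1) * int q + C * (int q - 1)"
      using wp_le IH by (intro add_mono mult_right_mono) auto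
    also have "\<dots> = C * (int p * int q - 1)" by (simp add: algebra_simps)
    also have "\<dots> \<le> C * (int k - 1)" using pq C_pos by simp
    finally show ?thesis .
  qed
qed

end


lemma fps_deriv_prod_gen:
  fixes f g :: "'i \<Rightarrow> 'a::field_char_0 fps"
  assumes "finite A" "\<And>i. i \<in> A \<Longrightarrow> fps_deriv (f i) = g i * f i"
  shows "fps_deriv (prod f A) = sum g A * prod f A"
  using assms
proof (induction A rule: finite_induct)
  case empty then show ?case by simp
next
  case (insert x F)
  have "fps_deriv (prod f (insert x F)) = fps_deriv (f x * prod f F)" using insert by simp
  also have "\<dots> = f x * (sum g F * prod f F) + g x * f x * prod f F"
    using insert by simp
  also have "\<dots> = sum g (insert x F) * prod f (insert x F)"
    using insert by (simp add: algebra_simps)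
  finally show ?case .
qed

lemma fps_trunc_mult_zero:
  fixes f g :: "'a::comm_ring_1 fps"
  assumes "\<forall>j\<le>k. f $ j = 0"
  shows "(g * f) $ k = 0"
  unfolding fps_mult_nth using assms by (intro sum.neutral) auto

lemma fps_vanish:
  fixes H S :: "'a::field_char_0 fps"
  assumes H0: "H $ 0 = 0" and D: "\<forall>k<N. (fps_deriv H - S * H) $ k = 0"
  shows "\<forall>k\<le>N. H $ k = 0"
proof -
  have "k \<le> N \<longrightarrow> (\<forall>j\<le>k. H $ j = 0)" for k
  proof (induction k)
    case 0 then show ?case using H0 by simp
  next
    case (Suc k)
    show ?case
    proof
      assume kN: "Suc k \<le> N"
      have IH: "\<forall>j\<le>k. H $ j = 0" using Suc kN by simp
      have "(S * H) $ k = 0" using fps_trunc_mult_zero[OF IH] .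
      moreover have "(fps_deriv H - S * H) $ k = 0" using D kN by simp
      ultimately have "of_nat (Suc k) * H $ (Suc k) = 0" by simp
      moreover have "of_nat (Suc k) \<noteq> (0::'a)" by (simp only: of_nat_eq_0_iff nat.distinct(1) not_False_eq_True)
      ultimately have "H $ Suc k = 0" by simp
      thus "\<forall>j\<le>Suc k. H $ j = 0" using IH le_Suc_eq by auto
    qed
  qed
  thus ?thesis by blast
qed

lemma fps_geom:
  fixes a :: "'a::comm_ring_1"
  shows "(1 - fps_const a * fps_X) * Abs_fps (\<lambda>n. a ^ (n+1)) = fps_const a"
proof (rule fps_ext)
  fix n
  have e: "(1 - fps_const a * fps_X) * Abs_fps (\<lambda>n. a ^ (n+1)) =
     Abs_fps (\<lambda>n. a ^ (n+1)) - fps_const a * (fps_X * Abs_fps (\<lambda>n. a ^ (n+1)))"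
    by (simp add: algebra_simps)
  show "((1 - fps_const a * fps_X) * Abs_fps (\<lambda>n. a ^ (n+1))) $ n = fps_const a $ n"
    unfolding e by (cases n) (simp_all)
qed

lemma fps_deriv_linprod:
  fixes \<alpha> :: "'i \<Rightarrow> 'a::field_char_0"
  assumes "finite I"
  shows "fps_deriv (\<Prod>i\<in>I. 1 - fps_const (\<alpha> i) * fps_X) =
    - Abs_fps (\<lambda>n. \<Sum>i\<in>I. \<alpha> i ^ (n+1)) * (\<Prod>i\<in>I. 1 - fps_const (\<alpha> i) * fps_X)"
proof -
  have "fps_deriv (\<Prod>i\<in>I. 1 - fps_const (\<alpha> i) * fps_X) =
     (\<Sum>i\<in>I. - Abs_fps (\<lambda>n. \<alpha> i ^ (n+1))) * (\<Prod>i\<in>I. 1 - fps_const (\<alpha> i) * fps_X)"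
  proof (rule fps_deriv_prod_gen[OF assms])
    fix i
    show "fps_deriv (1 - fps_const (\<alpha> i) * fps_X) =
        - Abs_fps (\<lambda>n. \<alpha> i ^ (n+1)) * (1 - fps_const (\<alpha> i) * fps_X)"
    proof -
      have d: "fps_deriv (1 - fps_const (\<alpha> i) * fps_X) = - fps_const (\<alpha> i)" by simp
      show ?thesis unfolding d using fps_geom[of "\<alpha> i"] by (simp add: mult.commute)
    qed
  qed
  moreover have "(\<Sum>i\<in>I. - Abs_fps (\<lambda>n. \<alpha> i ^ (n+1))) = - Abs_fps (\<lambda>n. \<Sum>i\<in>I. \<alpha> i ^ (n+1))"
    by (rule fps_ext) (simp add: fps_sum_nth sum_negf)
  ultimately show ?thesis by simp
qed



definition Eexp :: "'a::field_char_0 \<Rightarrow> nat \<Rightarrow> 'a fps" where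
  "Eexp c n = Abs_fps (\<lambda>m. if n dvd m then (-c) ^ (m div n) / fact (m div n) else 0)"

lemma Eexp_0: "Eexp c n $ 0 = 1"
  by (simp add: Eexp_def)

lemma Eexp_deriv:
  fixes c :: "'a::field_char_0"
  assumes n1: "n \<ge> 1"
  shows "fps_deriv (Eexp c n) = (fps_const (- of_nat n * c) * fps_X ^ (n - 1)) * Eexp c n"
proof (rule fps_ext)
  fix m
  have R: "((fps_const (- of_nat n * c) * fps_X ^ (n - 1)) * Eexp c n) $ m =
     (- of_nat n * c) * (if m < n - 1 then 0 else Eexp c n $ (m - (n - 1)))"
    by (simp add: mult.assoc fps_X_power_mult_nth)
  have L: "fps_deriv (Eexp c n) $ m = of_nat (Suc m) *
     (if n dvd Suc m then (-c) ^ (Suc m div n) / fact (Suc m div n) else 0)"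
    by (simp add: Eexp_def)
  show "fps_deriv (Eexp c n) $ m = ((fps_const (- of_nat n * c) * fps_X ^ (n - 1)) * Eexp c n) $ m"
  proof (cases "n dvd Suc m")
    case True
    then obtain j where j: "Suc m = n * j" by auto
    have j0: "j \<noteq> 0" using j by (metis mult_0_right nat.distinct(1))
    then obtain i where i: "j = Suc i" by (cases j) auto
    have "n \<le> n * j" using j0 by simp
    hence mn: "\<not> m < n - 1" using j by linarith
    have mi: "m - (n - 1) = n * i" using j i n1 by (simp add: algebra_simps)
    have d1: "Suc m div n = j" using j n1 by simp
    have d2: "n dvd n * i" by simp
    have d3: "n * i div n = i" using n1 by simp
    have "of_nat (Suc m) * ((-c) ^ j / fact j) = (- of_nat n * c) * ((-c) ^ i / (fact i :: 'a))"
    proof -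
      have s: "(1 + of_nat i :: 'a) \<noteq> 0"
        using of_nat_eq_0_iff[of "Suc i", where 'a='a] by simp
      have "fact i \<noteq> (0::'a)" by simp
      have gen: "\<And>a b x f. b \<noteq> 0 \<Longrightarrow> f \<noteq> 0 \<Longrightarrow> (a * b) * (x / (b * f)) = a * x / (f::'a)"
        by (simp add: field_simps)
      have "of_nat (Suc m) * ((-c) ^ j / fact j) =
          (of_nat n * of_nat (Suc i)) * (((-c) * (-c) ^ i) / (of_nat (Suc i) * fact i))"
        unfolding j i by (simp only: of_nat_mult fact_Suc power_Suc)
      also have "\<dots> = of_nat n * ((-c) * (-c) ^ i) / fact i"
        by (rule gen) (use s \<open>fact i \<noteq> 0\<close> in simp_all)
      finally show ?thesis by simp
    qed
    then show ?thesis unfolding L R using True mn mi d1 d3 by (simp add: Eexp_def)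
  next
    case False
    have "(if m < n - 1 then 0 else Eexp c n $ (m - (n - 1))) = 0"
    proof (cases "m < n - 1")
      case False
      have "Suc m = (m - (n - 1)) + n" using False n1 by simp
      hence "\<not> n dvd (m - (n - 1))" using \<open>\<not> n dvd Suc m\<close>
        by (metis dvd_add_triv_right_iff)
      then show ?thesis using False by (simp add: Eexp_def)
    qed simp
    then show ?thesis unfolding L R using False by simp
  qed
qed

definition fps_in :: "'a set \<Rightarrow> 'a::comm_ring_1 fps \<Rightarrow> bool" where
  "fps_in S f \<longleftrightarrow> (\<forall>i. f $ i \<in> S)"

context dvp
begin

lemma Eexp_Mw:
  assumes n1: "n \<ge> 1" and c: "c = 0 \<or> w c \<ge> C" and m1: "m \<ge> 1"
  shows "Eexp c n $ m \<in> Mw"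
proof (cases "n dvd m")
  case False then show ?thesis by (simp add: Eexp_def)
next
  case True
  define k where "k = m div n"
  have k1: "k \<ge> 1" using True m1 n1 unfolding k_def
    by (metis dvd_div_eq_0_iff less_one not_less not_one_le_zero)
  have Ek: "Eexp c n $ m = (-c) ^ k / fact k" using True by (simp add: Eexp_def k_def)
  show ?thesis
  proof (cases "c = 0")
    case True
    have "k > 0" using k1 by simp
    then show ?thesis using Ek True by (simp add: zero_power)
  next
    case False
    have wc: "w c \<ge> C" using c False by simp
    have nz1: "(-c) ^ k \<noteq> 0" using False by simp
    have nz2: "(fact k :: 'a) \<noteq> 0" by simp
    have "w ((-c) ^ k / fact k) = int k * w c - w (fact k :: 'a)"
      using wdiv[OF nz1 nz2] wpow[of "-c" k] False by (simp add: wneg)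
    also have "\<dots> \<ge> int k * C - C * (int k - 1)"
      using w_fact_bound[OF k1] wc k1 by (intro diff_mono mult_left_mono) auto
    finally have "w ((-c) ^ k / fact k) > 0" using C_pos by (simp add: algebra_simps)
    then show ?thesis unfolding Ek Mw_def by simp
  qed
qed

lemma fps_in_mult_OM: "fps_in Ow f \<Longrightarrow> fps_in Mw g \<Longrightarrow> fps_in Mw (f * g)"
  unfolding fps_in_def fps_mult_nth by (auto intro!: Mw_sum Mw_mult')

lemma fps_in_M_O: "fps_in Mw (f - 1) \<Longrightarrow> fps_in Ow f"
proof -
  assume a: "fps_in Mw (f - 1)"
  show ?thesis unfolding fps_in_def
  proof
    fix i
    have e: "f $ i = (f - 1) $ i + (1::'a fps) $ i" by simp
    have "(f - 1) $ i \<in> Ow" using a Mw_OO unfolding fps_in_def by blast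
    moreover have "(1::'a fps) $ i \<in> Ow" by simp
    ultimately show "f $ i \<in> Ow" unfolding e by (rule Ow_add)
  qed
qed

lemma fps_in_add: "fps_in Mw f \<Longrightarrow> fps_in Mw g \<Longrightarrow> fps_in Mw (f + g)"
  unfolding fps_in_def by (auto intro: Mw_add)

lemma fps_in_one_mult:
  assumes "fps_in Mw (f - 1)" "fps_in Mw (g - 1)"
  shows "fps_in Mw (f * g - 1)"
proof -
  have "f * g - 1 = (f - 1) * (g - 1) + (f - 1) + (g - 1)" by (simp add: algebra_simps)
  moreover have "fps_in Mw ((f - 1) * (g - 1))"
  proof (rule fps_in_mult_OM)
    show "fps_in Ow (f - 1)" using assms(1) Mw_OO unfolding fps_in_def by blast
  qed (rule assms(2))
  ultimately show ?thesis using assms by (metis fps_in_add)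
qed

lemma fps_in_one_prod:
  assumes "finite A" "\<And>i. i \<in> A \<Longrightarrow> fps_in Mw (f i - 1)"
  shows "fps_in Mw (prod f A - 1)"
  using assms
proof (induction A rule: finite_induct)
  case empty then show ?case by (simp add: fps_in_def)
next
  case (insert x F)
  then show ?case using fps_in_one_mult[of "f x" "prod f F"] by simp
qed

lemma Eexp_in:
  assumes n1: "n \<ge> 1" and c: "c = 0 \<or> w c \<ge> C"
  shows "fps_in Mw (Eexp c n - 1)"
  unfolding fps_in_def
proof
  fix m show "(Eexp c n - 1) $ m \<in> Mw"
    using Eexp_Mw[OF n1 c, of m] Eexp_0[of c n] by (cases "m = 0") auto
qed

end

lemma U_nth:
  fixes c :: "nat \<Rightarrow> 'a::field_char_0"
  shows "(\<Sum>n\<in>{1..N}. fps_const (- of_nat n * c n) * fps_X ^ (n - 1)) $ k =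
    (if k < N then - of_nat (Suc k) * c (Suc k) else 0)"
proof -
  have "(\<Sum>n\<in>{1..N}. fps_const (- of_nat n * c n) * fps_X ^ (n - 1)) $ k =
     (\<Sum>n\<in>{1..N}. if n = Suc k then - of_nat n * c n else 0)"
    unfolding fps_sum_nth by (intro sum.cong) auto
  also have "\<dots> = (if k < N then - of_nat (Suc k) * c (Suc k) else 0)"
    by (subst sum.delta) auto
  finally show ?thesis .
qed



lemma fps_prod_nth0: "(prod f A) $ 0 = (\<Prod>i\<in>A. (f i) $ 0)"
  for f :: "'i \<Rightarrow> 'a::comm_ring_1 fps"
  by (induction A rule: infinite_finite_induct) (auto simp: fps_mult_nth)

context dvp
begin

lemma fps_in_mult_OO: "fps_in Ow f \<Longrightarrow> fps_in Ow g \<Longrightarrow> fps_in Ow (f * g)"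
  unfolding fps_in_def fps_mult_nth by (auto intro!: Ow_sum Ow_mult)

lemma fps_in_prod_OO: "(\<And>i. i \<in> A \<Longrightarrow> fps_in Ow (f i)) \<Longrightarrow> fps_in Ow (prod f A)"
proof (induction A rule: infinite_finite_induct)
  case (infinite A) then show ?case by (simp add: fps_in_def)
next
  case empty then show ?case by (simp add: fps_in_def)
next
  case (insert x F) then show ?case by (simp add: fps_in_mult_OO)
qed

lemma fps_in_lin: "a \<in> Ow \<Longrightarrow> fps_in Ow (1 - fps_const a * fps_X)"
  unfolding fps_in_def by (auto intro: Ow_neg)

lemma main_cong:
  fixes \<alpha> \<beta> c :: "nat \<Rightarrow> 'a"
  assumes \<alpha>O: "\<And>i. i < d \<Longrightarrow> \<alpha> i \<in> Ow" and \<beta>O: "\<And>i. i < d \<Longrightarrow> \<beta> i \<in> Ow"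
    and cC: "\<And>n. n \<ge> 1 \<Longrightarrow> c n = 0 \<or> w (c n) \<ge> C"
    and sc: "\<And>n. n \<ge> 1 \<Longrightarrow> (\<Sum>i<d. \<alpha> i ^ n) - (\<Sum>i<d. \<beta> i ^ n) = of_nat n * c n"
  shows "\<forall>k\<le>d. (\<Prod>i<d. 1 - fps_const (\<alpha> i) * fps_X) $ k - (\<Prod>i<d. 1 - fps_const (\<beta> i) * fps_X) $ k \<in> Mw"
proof -
  define A where "A = (\<Prod>i<d. 1 - fps_const (\<alpha> i) * fps_X)"
  define B where "B = (\<Prod>i<d. 1 - fps_const (\<beta> i) * fps_X)"
  define G where "G = (\<Prod>n\<in>{1..d}. Eexp (c n) n)"
  define U where "U = (\<Sum>n\<in>{1..d}. fps_const (- of_nat n * c n) * fps_X ^ (n - 1))"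
  define Sa where "Sa = Abs_fps (\<lambda>n. \<Sum>i<d. \<alpha> i ^ (n+1))"
  define Sb where "Sb = Abs_fps (\<lambda>n. \<Sum>i<d. \<beta> i ^ (n+1))"
  have dA: "fps_deriv A = - Sa * A" unfolding A_def Sa_def by (rule fps_deriv_linprod) simp
  have dB: "fps_deriv B = - Sb * B" unfolding B_def Sb_def by (rule fps_deriv_linprod) simp
  have dG: "fps_deriv G = U * G" unfolding G_def U_def
    by (rule fps_deriv_prod_gen, simp, rule Eexp_deriv, simp)
  define H where "H = A - B * G"
  have H0: "H $ 0 = 0"
    unfolding H_def A_def B_def G_def by (simp add: fps_mult_nth fps_prod_nth0 Eexp_0)
  have key: "fps_deriv H - (- Sa) * H = (B * G) * (Sb - U - Sa)"
    unfolding H_def using dA dB dG by (simp add: algebra_simps)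
  have Z: "\<forall>k<d. (fps_deriv H - (- Sa) * H) $ k = 0"
  proof (intro allI impI)
    fix k assume kd: "k < d"
    have "\<forall>j\<le>k. (Sb - U - Sa) $ j = 0"
    proof (intro allI impI)
      fix j assume jk: "j \<le> k"
      have Uj: "U $ j = (if j < d then - of_nat (Suc j) * c (Suc j) else 0)"
        unfolding U_def by (rule U_nth)
      have "(Sb - U - Sa) $ j = (\<Sum>i<d. \<beta> i ^ Suc j) - (- of_nat (Suc j) * c (Suc j)) - (\<Sum>i<d. \<alpha> i ^ Suc j)"
        using jk kd Uj unfolding Sa_def Sb_def by simp
      also have "\<dots> = 0" using sc[of "Suc j"] by (simp add: algebra_simps)
      finally show "(Sb - U - Sa) $ j = 0" .
    qed
    then show "(fps_deriv H - (- Sa) * H) $ k = 0" unfolding key by (rule fps_trunc_mult_zero)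
  qed
  have Hz: "\<forall>k\<le>d. H $ k = 0" using fps_vanish[OF H0 Z] .
  have BO: "fps_in Ow B" unfolding B_def
    by (rule fps_in_prod_OO) (use \<beta>O in \<open>auto intro: fps_in_lin\<close>)
  have GM: "fps_in Mw (G - 1)" unfolding G_def
    by (rule fps_in_one_prod) (simp, rule Eexp_in, simp, rule cC, simp)
  have BGM: "fps_in Mw (B * (G - 1))" by (rule fps_in_mult_OM[OF BO GM])
  have "A - B = H + B * (G - 1)" unfolding H_def by (simp add: algebra_simps)
  then have "\<forall>k\<le>d. (A - B) $ k \<in> Mw" using Hz BGM unfolding fps_in_def by simp
  then show ?thesis unfolding A_def B_def by simp
qed

end


context dval
begin

definition "pin S (f::'a poly) \<longleftrightarrow> (\<forall>k. coeff f k \<in> S)"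

lemma pin_mult_OO: "pin Ow f \<Longrightarrow> pin Ow g \<Longrightarrow> pin Ow (f * g)"
  unfolding pin_def coeff_mult by (blast intro: Ow_sum Ow_mult)

lemma pin_prod_OO: "(\<And>i. i \<in> A \<Longrightarrow> pin Ow (f i)) \<Longrightarrow> pin Ow (prod f A)"
proof (induction A rule: infinite_finite_induct)
  case (infinite A) then show ?case by (simp add: pin_def coeff_1)
next
  case empty then show ?case by (simp add: pin_def coeff_1)
next
  case (insert x F) then show ?case by (simp add: pin_mult_OO)
qed

lemma pin_lin: "a \<in> Ow \<Longrightarrow> pin Ow [:-a, 1:]"
  unfolding pin_def
proof
  fix k assume a: "a \<in> Ow"
  show "coeff [:-a, 1:] k \<in> Ow"
  proof (cases k)
    case 0 then show ?thesis using Ow_neg[OF a] by simp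
  next
    case (Suc m) then show ?thesis by (cases m) simp_all
  qed
qed

lemma div_lin:
  assumes M: "pin Mw (R * [:-a, 1:])" and a: "a \<in> Ow"
  shows "pin Mw R"
proof -
  have m: "R * [:-a, 1:] = pCons 0 R - smult a R"
    by (simp add: mult_pCons_right)
  have rec: "coeff R k = coeff (R * [:-a, 1:]) (Suc k) + a * coeff R (Suc k)" for k
    unfolding m by simp
  have all: "\<forall>k. degree R < k + n \<longrightarrow> coeff R k \<in> Mw" for n
  proof (induction n)
    case 0 then show ?case by (simp add: coeff_eq_0)
  next
    case (Suc n)
    show ?case
    proof (intro allI impI)
      fix k assume "degree R < k + Suc n"
      hence "coeff R (Suc k) \<in> Mw" using Suc by simp
      moreover have "coeff (R * [:-a, 1:]) (Suc k) \<in> Mw" using M unfolding pin_def by blast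
      ultimately have "coeff (R * [:-a, 1:]) (Suc k) + a * coeff R (Suc k) \<in> Mw"
        by (intro Mw_add Mw_mult' a)
      then show "coeff R k \<in> Mw" by (subst rec[of k])
    qed
  qed
  show ?thesis unfolding pin_def
  proof
    fix k show "coeff R k \<in> Mw" using all[of "Suc (degree R)"] by simp
  qed
qed

lemma poly_cong_root:
  assumes "pin Mw (P - Q)" "x \<in> Ow"
  shows "poly P x - poly Q x \<in> Mw"
proof -
  have "poly P x - poly Q x = poly (P - Q) x" by simp
  also have "\<dots> = (\<Sum>i\<le>degree (P - Q). coeff (P - Q) i * x ^ i)" by (rule poly_altdef)
  also have "\<dots> \<in> Mw" 
  proof (rule Mw_sum)
    fix i show "coeff (P - Q) i * x ^ i \<in> Mw"
      using assms(1) Ow_pow[OF assms(2)] unfolding pin_def by (blast intro: Mw_mult)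
  qed
  finally show ?thesis .
qed


lemma matching:
  fixes d :: nat
  shows "\<forall>(\<alpha>::nat \<Rightarrow> 'a) \<beta>. (\<forall>i<d. \<alpha> i \<in> Ow) \<longrightarrow> (\<forall>i<d. \<beta> i \<in> Ow) \<longrightarrow>
     pin Mw ((\<Prod>i<d. [:-\<alpha> i, 1:]) - (\<Prod>i<d. [:-\<beta> i, 1:])) \<longrightarrow>
     (\<exists>\<sigma>. bij_betw \<sigma> {..<d} {..<d} \<and> (\<forall>i<d. \<alpha> i - \<beta> (\<sigma> i) \<in> Mw))"
proof (induction d)
  case 0 then show ?case by (auto intro!: exI[of _ id])
next
  case (Suc d)
  show ?case
  proof (intro allI impI)
    fix \<alpha> \<beta> :: "nat \<Rightarrow> 'a"
    assume \<alpha>O: "\<forall>i<Suc d. \<alpha> i \<in> Ow" and \<beta>O: "\<forall>i<Suc d. \<beta> i \<in> Ow"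
      and PQ: "pin Mw ((\<Prod>i<Suc d. [:-\<alpha> i, 1:]) - (\<Prod>i<Suc d. [:-\<beta> i, 1:]))"
    define a where "a = \<alpha> d"
    have aO: "a \<in> Ow" using \<alpha>O a_def by simp
    define Pd where "Pd = (\<Prod>i<d. [:-\<alpha> i, 1:])"
    have Pe: "(\<Prod>i<Suc d. [:-\<alpha> i, 1:]) = Pd * [:-a, 1:]" unfolding Pd_def a_def by simp
    define Ps where "Ps = (\<Prod>i<Suc d. [:-\<alpha> i, 1:])"
    define Qs where "Qs = (\<Prod>i<Suc d. [:-\<beta> i, 1:])"
    have h1: "poly Ps a - poly Qs a \<in> Mw"
      unfolding Ps_def Qs_def by (rule poly_cong_root[OF PQ aO])
    have h2: "poly Ps a = 0" unfolding Ps_def Pe by simp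
    have "- poly Qs a \<in> Mw" using h1 h2 by simp
    hence "poly Qs a \<in> Mw" using Mw_neg by fastforce
    moreover have "poly Qs a = (\<Prod>i<Suc d. a - \<beta> i)"
      unfolding Qs_def poly_prod by (rule prod.cong) simp_all
    ultimately have "(\<Prod>i<Suc d. a - \<beta> i) \<in> Mw" by simp
    then obtain j where j: "j < Suc d" and abj: "a - \<beta> j \<in> Mw"
      using Mw_prod_prime[of "{..<Suc d}" "\<lambda>i. a - \<beta> i"] aO \<beta>O by (auto intro: Ow_diff)
    define \<tau> where "\<tau> i = (if i = j then d else if i = d then j else i)" for i
    have \<tau>\<tau>: "\<tau> (\<tau> i) = i" for i unfolding \<tau>_def by auto
    have \<tau>S: "i < Suc d \<Longrightarrow> \<tau> i < Suc d" for i using j unfolding \<tau>_def by auto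
    have bij\<tau>: "bij_betw \<tau> {..<Suc d} {..<Suc d}"
      by (rule bij_betw_byWitness[where f'=\<tau>]) (auto simp: \<tau>\<tau> \<tau>S)
    define \<beta>' where "\<beta>' i = \<beta> (\<tau> i)" for i
    have \<beta>'O: "\<forall>i<d. \<beta>' i \<in> Ow" using \<beta>O \<tau>S unfolding \<beta>'_def by auto
    have \<beta>'d: "\<beta>' d = \<beta> j" unfolding \<beta>'_def \<tau>_def by auto
    define Qd where "Qd = (\<Prod>i<d. [:-\<beta>' i, 1:])"
    have Qe: "(\<Prod>i<Suc d. [:-\<beta> i, 1:]) = Qd * [:-\<beta> j, 1:]"
    proof -
      have "(\<Prod>i<Suc d. [:-\<beta> i, 1:]) = (\<Prod>i<Suc d. [:-\<beta>' i, 1:])"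
        unfolding \<beta>'_def using prod.reindex_bij_betw[OF bij\<tau>, of "\<lambda>i. [:-\<beta> i, 1:]"] by simp
      also have "\<dots> = Qd * [:-\<beta> j, 1:]" unfolding Qd_def using \<beta>'d by simp
      finally show ?thesis .
    qed
    have QdO: "pin Ow Qd" unfolding Qd_def
      by (rule pin_prod_OO) (use \<beta>'O pin_lin in auto)
    have iden: "(Pd - Qd) * [:-a, 1:] = (Pd * [:-a, 1:] - Qd * [:-\<beta> j, 1:]) + Qd * [:a - \<beta> j:]"
    proof -
      have h: "[:-\<beta> j, 1:] = [:-a, 1:] + [:a - \<beta> j:]" by simp
      have g: "\<And>x y L c :: 'a poly. (x - y) * L = (x * L - y * (L + c)) + y * c"
        by (simp add: algebra_simps)
      show ?thesis unfolding h by (rule g)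
    qed
    have "pin Mw (Qd * [:a - \<beta> j:])" unfolding pin_def
    proof
      fix k
      have "coeff (Qd * [:a - \<beta> j:]) k = (a - \<beta> j) * coeff Qd k" by simp
      then show "coeff (Qd * [:a - \<beta> j:]) k \<in> Mw"
        using Mw_mult[OF abj, of "coeff Qd k"] QdO unfolding pin_def by simp
    qed
    moreover have "pin Mw (Pd * [:-a, 1:] - Qd * [:-\<beta> j, 1:])" using PQ unfolding Pe Qe .
    ultimately have "pin Mw ((Pd - Qd) * [:-a, 1:])" unfolding iden pin_def
      by (simp add: Mw_add)
    hence pd: "pin Mw (Pd - Qd)" by (rule div_lin[OF _ aO])
    have \<alpha>O': "\<forall>i<d. \<alpha> i \<in> Ow" using \<alpha>O by simp
    have "\<exists>\<sigma>0. bij_betw \<sigma>0 {..<d} {..<d} \<and> (\<forall>i<d. \<alpha> i - \<beta>' (\<sigma>0 i) \<in> Mw)"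
      using Suc.IH \<alpha>O' \<beta>'O pd unfolding Pd_def Qd_def by blast
    then obtain \<sigma>0 where b0: "bij_betw \<sigma>0 {..<d} {..<d}" and m0: "\<forall>i<d. \<alpha> i - \<beta>' (\<sigma>0 i) \<in> Mw"
      by blast
    define \<sigma>1 where "\<sigma>1 = \<sigma>0(d := d)"
    have b1a: "bij_betw \<sigma>1 {..<d} {..<d}"
      using b0 unfolding \<sigma>1_def by (subst bij_betw_cong[where g=\<sigma>0]) auto
    have b1b: "bij_betw \<sigma>1 {d} {d}" unfolding \<sigma>1_def by auto
    have "bij_betw \<sigma>1 ({..<d} \<union> {d}) ({..<d} \<union> {d})"
      by (rule bij_betw_combine[OF b1a b1b]) auto
    moreover have "{..<d} \<union> {d} = {..<Suc d}" by auto
    ultimately have b1: "bij_betw \<sigma>1 {..<Suc d} {..<Suc d}" by simp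
    have bij: "bij_betw (\<tau> \<circ> \<sigma>1) {..<Suc d} {..<Suc d}" by (rule bij_betw_trans[OF b1 bij\<tau>])
    have "\<forall>i<Suc d. \<alpha> i - \<beta> ((\<tau> \<circ> \<sigma>1) i) \<in> Mw"
    proof (intro allI impI)
      fix i assume "i < Suc d"
      then consider "i < d" | "i = d" by linarith
      then show "\<alpha> i - \<beta> ((\<tau> \<circ> \<sigma>1) i) \<in> Mw"
      proof cases
        case 1 then show ?thesis using m0 unfolding \<sigma>1_def \<beta>'_def by auto
      next
        case 2 then show ?thesis using abj \<beta>'d unfolding \<sigma>1_def \<beta>'_def a_def by simp
      qed
    qed
    then show "\<exists>\<sigma>. bij_betw \<sigma> {..<Suc d} {..<Suc d} \<and> (\<forall>i<Suc d. \<alpha> i - \<beta> (\<sigma> i) \<in> Mw)"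
      using bij by blast
  qed
qed

end


lemma refl_lin: "fps_of_poly (reflect_poly [:-a, 1:]) = 1 - fps_const (a::'a::comm_ring_1) * fps_X"
proof (rule fps_ext)
  fix n
  show "fps_of_poly (reflect_poly [:-a, 1:]) $ n = (1 - fps_const a * fps_X) $ n"
    by (cases n) (auto simp: fps_of_poly_nth coeff_reflect_poly coeff_pCons split: nat.split)
qed

theorem proposition6p6:
  fixes K :: "'a::field_char_0 set" and v w :: "'a \<Rightarrow> int" and p :: nat and e :: int
    and P Q :: "'a poly" and d :: nat and \<alpha> \<beta> :: "nat \<Rightarrow> 'a"
  assumes K: "padic_local_field K v p"
    and e_def: "e = v (of_nat p)"
    and e_le: "e \<le> int p - 1"
    and L: "finite_valued_extension K v w"
    and P_coeffs: "\<forall>i. coeff P i \<in> val_ring K v"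
    and Q_coeffs: "\<forall>i. coeff Q i \<in> val_ring K v"
    and P_monic: "lead_coeff P = 1" and Q_monic: "lead_coeff Q = 1"
    and P_deg: "degree P = d" and Q_deg: "degree Q = d"
    and P_roots: "P = (\<Prod>i<d. [:- \<alpha> i, 1:])"
    and Q_roots: "Q = (\<Prod>i<d. [:- \<beta> i, 1:])"
    and \<alpha>_int: "\<forall>i<d. \<alpha> i \<in> val_ring UNIV w"
    and \<beta>_int: "\<forall>i<d. \<beta> i \<in> val_ring UNIV w"
    and cong: "\<forall>n::nat. n \<ge> 1 \<longrightarrow>
       (\<exists>a\<in>val_ideal K v. (\<Sum>i<d. \<alpha> i ^ n) - (\<Sum>i<d. \<beta> i ^ n) = of_nat n * a)"
  shows "\<exists>\<sigma>. bij_betw \<sigma> {..<d} {..<d} \<and>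
           (\<forall>i<d. \<alpha> i - \<beta> (\<sigma> i) \<in> val_ideal UNIV w)"
proof -
  obtain Cc :: int where Cc: "Cc > 0" and wv: "\<forall>x\<in>K - {0}. w x = Cc * v x"
    using L unfolding finite_valued_extension_def by blast
  have dvw: "discrete_valuation_on UNIV w" using L unfolding finite_valued_extension_def by blast
  have pp: "prime p" and sf: "is_subfield K" and vp: "v (of_nat p) > 0"
    using K unfolding padic_local_field_def by auto
  have natK: "of_nat n \<in> K" for n
  proof (induction n)
    case 0 then show ?case using sf unfolding is_subfield_def by simp
  next
    case (Suc n) then show ?case using sf unfolding is_subfield_def by simp
  qed
  have p0: "(of_nat p :: 'a) \<noteq> 0" using pp by (simp add: prime_gt_0_nat)
  have wp: "w (of_nat p) = Cc * e" using wv natK[of p] p0 e_def by simp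
  have wp_pos: "w (of_nat p) > 0" using wp Cc vp e_def by simp
  have wp_le: "w (of_nat p) \<le> Cc * (int p - 1)" using wp Cc e_le by simp
  interpret dvp w p Cc
    by unfold_locales (use dvw pp Cc wp_pos wp_le in auto)
  have OwE: "val_ring UNIV w = Ow" unfolding val_ring_def Ow_def by auto
  have MwE: "val_ideal UNIV w = Mw" unfolding val_ideal_def Mw_def by auto
  define c where "c n = (SOME a. a \<in> val_ideal K v \<and>
      (\<Sum>i<d. \<alpha> i ^ n) - (\<Sum>i<d. \<beta> i ^ n) = of_nat n * a)" for n
  have cP: "c n \<in> val_ideal K v \<and> (\<Sum>i<d. \<alpha> i ^ n) - (\<Sum>i<d. \<beta> i ^ n) = of_nat n * c n"
    if "n \<ge> 1" for n
    unfolding c_def by (rule someI_ex) (use cong that in blast)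
  have cC: "c n = 0 \<or> w (c n) \<ge> Cc" if "n \<ge> 1" for n
  proof (cases "c n = 0")
    case False
    have "c n \<in> K" "v (c n) > 0" using cP[OF that] False unfolding val_ideal_def by auto
    then show ?thesis using wv False Cc by auto
  qed simp
  have mc: "\<forall>k\<le>d. (\<Prod>i<d. 1 - fps_const (\<alpha> i) * fps_X) $ k - (\<Prod>i<d. 1 - fps_const (\<beta> i) * fps_X) $ k \<in> Mw"
    by (rule main_cong) (use \<alpha>_int \<beta>_int OwE cC cP in auto)
  have rP: "fps_of_poly (reflect_poly P) = (\<Prod>i<d. 1 - fps_const (\<alpha> i) * fps_X)"
    unfolding P_roots reflect_poly_prod fps_of_poly_prod refl_lin ..
  have rQ: "fps_of_poly (reflect_poly Q) = (\<Prod>i<d. 1 - fps_const (\<beta> i) * fps_X)"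
    unfolding Q_roots reflect_poly_prod fps_of_poly_prod refl_lin ..
  have "pin Mw (P - Q)" unfolding pin_def
  proof
    fix k
    show "coeff (P - Q) k \<in> Mw"
    proof (cases "k \<le> d")
      case True
      have "coeff P k = coeff (reflect_poly P) (d - k)" using True P_deg by (simp add: coeff_reflect_poly)
      moreover have "coeff Q k = coeff (reflect_poly Q) (d - k)" using True Q_deg by (simp add: coeff_reflect_poly)
      ultimately show ?thesis using mc[rule_format, of "d - k"]
        unfolding rP[symmetric] rQ[symmetric] by (simp add: fps_of_poly_nth)
    next
      case False
      then show ?thesis using P_deg Q_deg by (simp add: coeff_eq_0)
    qed
  qed
  then have "\<exists>\<sigma>. bij_betw \<sigma> {..<d} {..<d} \<and> (\<forall>i<d. \<alpha> i - \<beta> (\<sigma> i) \<in> Mw)"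
    using matching[of d] \<alpha>_int \<beta>_int unfolding OwE P_roots Q_roots by blast
  then show ?thesis unfolding MwE .
qed


end
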